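(* Let $\mu^\diamond\in\mathrm{Meas}(\mathcal X)$ be a tomographically complete measurement with finite outcome set $\mathcal Y$. Then for every finite quantum score $S$ on $\mathcal X$ there exists a quantum score $S^\diamond=(s^\diamond,\mu^{\mathrm c})$ with constant measurement function $\mu^{\mathrm c}(\rho)=\mu^\diamond$ for all $\rho$, such that $S^\diamond(\rho';\rho)=S(\rho';\rho)$ for all $\rho,\rho'\in\mathrm{Dens}(\mathcal X)$.
   Context: Let $\mathcal X=\mathbb C^n$, $\mathrm{Herm}(\mathcal X)$ the Hermitian matrices with $\langle X,Y\rangle=\mathrm{Tr}(X^*Y)$, $\mathrm{Pos}(\mathcal X)$ the positive semidefinite ones, $\mathrm{Dens}(\mathcal X)$ the trace-one elements of $\mathrm{Pos}(\mathcal X)$. A measurement with finite outcome set $\mathcal Y\subseteq\mathbb N$ is $\mu=\{\mu_y\}_{y\in\mathcal Y}\subseteq\mathrm{Pos}(\mathcal X)$ with $\sum_y\mu_y=I$; it is tomographically complete if the real span of $\{\mu_y\}$ is $\mathrm{Herm}(\mathcal X)$. A quantum score is $S=(s,\mu)$ with $s:\mathrm{Dens}(\mathcal X)\times\mathbb N\to\mathbb R\cup\{\pm\infty\}$, $\mu:\mathrm{Dens}(\mathcal X)\to\mathrm{Meas}(\mathcal X)$ (outcome set $\mathcal Y(\rho')$ of $\mu(\rho')$), with expected score $S(\rho';\rho)=\sum_{y\in\mathcal Y(\rho')}\langle\mu(\rho')_y,\rho\rangle s(\rho',y)$. $S$ is finite if $s$ takes only real values. *)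

theory Defs
  imports "HOL-Analysis.Analysis" "HOL-Library.Extended_Real"
begin

text \<open>Operators on X = C^n are complex n x n matrices, indexed by a finite type 'n.\<close>

type_synonym 'n cmat = "complex^'n^'n"

definition adjoint_mat :: "'n::finite cmat \<Rightarrow> 'n cmat" where
  "adjoint_mat A = (\<chi> i j. cnj (A $ j $ i))"

definition hermitian :: "'n::finite cmat \<Rightarrow> bool" where
  "hermitian A \<longleftrightarrow> adjoint_mat A = A"

definition Herm :: "'n::finite cmat set" where
  "Herm = {A. hermitian A}"

definition hs_inner :: "'n::finite cmat \<Rightarrow> 'n cmat \<Rightarrow> complex" where
  "hs_inner X Y = trace (adjoint_mat X ** Y)"

definition psd :: "'n::finite cmat \<Rightarrow> bool" where
  "psd A \<longleftrightarrow> hermitian A \<and>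
     (\<forall>x::complex^'n. 0 \<le> Re (\<Sum>i\<in>UNIV. cnj (x $ i) * (A *v x) $ i))"

definition Pos :: "'n::finite cmat set" where
  "Pos = {A. psd A}"

definition Dens :: "'n::finite cmat set" where
  "Dens = {A \<in> Pos. trace A = 1}"

text \<open>A measurement: a finite outcome set Y of naturals together with the
  operators mu_y (only the values on Y matter).\<close>
type_synonym 'n meas = "nat set \<times> (nat \<Rightarrow> 'n cmat)"

definition is_measurement :: "'n::finite meas \<Rightarrow> bool" where
  "is_measurement m \<longleftrightarrow> finite (fst m) \<and> (\<forall>y\<in>fst m. snd m y \<in> Pos)
     \<and> (\<Sum>y\<in>fst m. snd m y) = mat 1"

definition tomographically_complete :: "'n::finite meas \<Rightarrow> bool" where
  "tomographically_complete m \<longleftrightarrow>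
     {(\<Sum>y\<in>fst m. c y *\<^sub>R snd m y) | c :: nat \<Rightarrow> real. True} = Herm"

type_synonym 'n qscore = "('n cmat \<Rightarrow> nat \<Rightarrow> ereal) \<times> ('n cmat \<Rightarrow> 'n meas)"

definition is_quantum_score :: "'n::finite qscore \<Rightarrow> bool" where
  "is_quantum_score S \<longleftrightarrow> (\<forall>\<rho>\<in>Dens. is_measurement (snd S \<rho>))"

definition finite_score :: "'n::finite qscore \<Rightarrow> bool" where
  "finite_score S \<longleftrightarrow> (\<forall>\<rho>\<in>Dens. \<forall>y. \<bar>fst S \<rho> y\<bar> \<noteq> \<infinity>)"

text \<open>Expected score S(rho'; rho) = sum_{y in Y(rho')} <mu(rho')_y, rho> s(rho', y).
  The inner product of two Hermitian matrices is real; we take its real part.\<close>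
definition expected_score :: "'n::finite qscore \<Rightarrow> 'n cmat \<Rightarrow> 'n cmat \<Rightarrow> ereal" where
  "expected_score S \<rho>' \<rho> =
     (\<Sum>y\<in>fst (snd S \<rho>'). ereal (Re (hs_inner (snd (snd S \<rho>') y) \<rho>)) * fst S \<rho>' y)"

end

theory Submission
  imports Defs
begin

lemma cscale: "(r *\<^sub>R z::complex) = of_real r * z" by (simp add: scaleR_conv_of_real)

lemma adj_scaleR: "adjoint_mat (r *\<^sub>R X) = r *\<^sub>R adjoint_mat (X::'n::finite cmat)"
  by (simp add: adjoint_mat_def vec_eq_iff cscale)

lemma adj_sum: "adjoint_mat (sum f A) = sum (\<lambda>y. adjoint_mat (f y)) (A::'a set)"
  by (induct A rule: infinite_finite_induct)
     (auto simp: adjoint_mat_def vec_eq_iff)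

lemma herm_sum:
  assumes "\<forall>y\<in>A. hermitian (f y)"
  shows "hermitian (\<Sum>y\<in>A. c y *\<^sub>R (f y::'n::finite cmat))"
  using assms unfolding hermitian_def
  by (simp add: adj_sum adj_scaleR)

lemma hs_inner_scaleR: "hs_inner (r *\<^sub>R X) Y = of_real r * hs_inner X (Y::'n::finite cmat)"
  unfolding hs_inner_def adj_scaleR trace_def matrix_matrix_mult_def
  by (simp add: sum_distrib_left mult.assoc cscale)

lemma hs_inner_sum: "hs_inner (sum f A) (Y::'n::finite cmat) = (\<Sum>y\<in>A. hs_inner (f y) Y)"
  unfolding hs_inner_def adj_sum trace_def matrix_matrix_mult_def
  by (induct A rule: infinite_finite_induct)
     (auto simp: sum.distrib sum_distrib_left distrib_right)

lemma Re_hs_lin: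
  "Re (hs_inner (\<Sum>y\<in>A. c y *\<^sub>R f y) (Y::'n::finite cmat)) = (\<Sum>y\<in>A. Re (hs_inner (f y) Y) * c y)"
  by (simp add: hs_inner_sum hs_inner_scaleR mult.commute)

theorem proposition3p4:
  fixes mu0 :: "'n::finite meas"
  assumes "is_measurement mu0"
    and "tomographically_complete mu0"
    and "is_quantum_score S"
    and "finite_score S"
  shows "\<exists>s0. is_quantum_score (s0, \<lambda>\<rho>. mu0) \<and>
           (\<forall>\<rho>\<in>Dens. \<forall>\<rho>'\<in>Dens. expected_score (s0, \<lambda>\<rho>. mu0) \<rho>' \<rho> = expected_score S \<rho>' \<rho>)"
proof -
  define A where "A \<rho>' = (\<Sum>y\<in>fst (snd S \<rho>'). real_of_ereal (fst S \<rho>' y) *\<^sub>R snd (snd S \<rho>') y)" for \<rho>'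
  have ex: "\<exists>c. (\<Sum>y\<in>fst mu0. c y *\<^sub>R snd mu0 y) = A \<rho>'" if "\<rho>' \<in> Dens" for \<rho>'
  proof -
    have "is_measurement (snd S \<rho>')" using assms(3) that by (simp add: is_quantum_score_def)
    hence "\<forall>y\<in>fst (snd S \<rho>'). hermitian (snd (snd S \<rho>') y)"
      by (auto simp: is_measurement_def Pos_def psd_def)
    hence "A \<rho>' \<in> Herm" unfolding A_def Herm_def by (simp add: herm_sum)
    then obtain c where "A \<rho>' = (\<Sum>y\<in>fst mu0. c y *\<^sub>R snd mu0 y)"
      using assms(2) unfolding tomographically_complete_def by blast
    thus ?thesis by (intro exI[of _ c]) simp
  qed
  define c where "c \<rho>' = (SOME c. (\<Sum>y\<in>fst mu0. c y *\<^sub>R snd mu0 y) = A \<rho>')" for \<rho>'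
  have c: "(\<Sum>y\<in>fst mu0. c \<rho>' y *\<^sub>R snd mu0 y) = A \<rho>'" if "\<rho>' \<in> Dens" for \<rho>'
    unfolding c_def using someI_ex[OF ex[OF that]] .
  define s0 where "s0 \<rho>' y = ereal (c \<rho>' y)" for \<rho>' y
  show ?thesis
  proof (intro exI[of _ s0] conjI ballI)
    show "is_quantum_score (s0, \<lambda>\<rho>. mu0)" using assms(1) by (simp add: is_quantum_score_def)
  next
    fix \<rho> \<rho>' :: "'n cmat" assume r: "\<rho> \<in> Dens" "\<rho>' \<in> Dens"
    have fin: "fst S \<rho>' y = ereal (real_of_ereal (fst S \<rho>' y))" for y
      using assms(4) r(2) unfolding finite_score_def
      by (cases "fst S \<rho>' y") (auto dest!: bspec[OF _ r(2)] spec[of _ y])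
    have "expected_score (s0, \<lambda>\<rho>. mu0) \<rho>' \<rho> =
        ereal (\<Sum>y\<in>fst mu0. Re (hs_inner (snd mu0 y) \<rho>) * c \<rho>' y)"
      unfolding expected_score_def s0_def by (simp add: sum_ereal)
    also have "\<dots> = ereal (Re (hs_inner (A \<rho>') \<rho>))"
      by (simp only: Re_hs_lin[symmetric] c[OF r(2)])
    also have "\<dots> = ereal (\<Sum>y\<in>fst (snd S \<rho>'). Re (hs_inner (snd (snd S \<rho>') y) \<rho>) * real_of_ereal (fst S \<rho>' y))"
      unfolding A_def Re_hs_lin ..
    also have "\<dots> = expected_score S \<rho>' \<rho>"
    proof -
      have "ereal (Re (hs_inner (snd (snd S \<rho>') y) \<rho>)) * fst S \<rho>' y =
          ereal (Re (hs_inner (snd (snd S \<rho>') y) \<rho>) * real_of_ereal (fst S \<rho>' y))" for y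
        by (subst fin) simp
      thus ?thesis unfolding expected_score_def by (simp only: sum_ereal[symmetric])
    qed
    finally show "expected_score (s0, \<lambda>\<rho>. mu0) \<rho>' \<rho> = expected_score S \<rho>' \<rho>" .
  qed
qed

end
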